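(* Let $A\in\{0,1\}^{n\times n}$ and let $(n_1,n_2)$ be positive integers with $n_1n_2=n$. For each $(i,j)$ with $a_{ij}=1$, write $i-1=\tilde i_1 n_2+\tilde i_2$ and $j-1=\tilde j_1 n_2+\tilde j_2$ with $0\le \tilde i_1,\tilde j_1<n_1$, $0\le \tilde i_2,\tilde j_2<n_2$ (Euclidean division), set $i_k=\tilde i_k+1$, $j_k=\tilde j_k+1$, and define the linear indices $l_1=(j_1-1)n_1+i_1$ and $l_2=(j_2-1)n_2+i_2$. Let $S\subset\mathbb{N}\times\mathbb{N}$ be the set of all pairs $(l_1,l_2)$ so obtained as $(i,j)$ ranges over the positions of the nonzero entries of $A$. Then $A=A_1\otimes A_2$ for some $A_1\in\{0,1\}^{n_1\times n_1}$, $A_2\in\{0,1\}^{n_2\times n_2}$ if and only if there exist subsets $S_1,S_2\subset\mathbb{N}$ such that $S=S_1\times S_2$.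
   Context: Kronecker products of binary matrices use Boolean arithmetic ($1+1=1$, products as usual). *)

theory Defs
  imports Main
begin

text \<open>Binary n x n matrices are represented as functions nat => nat => bool,
  with 1-based indices; only the entries with indices in 1..n are relevant.
  True stands for the entry 1.\<close>

definition kron :: "nat \<Rightarrow> (nat \<Rightarrow> nat \<Rightarrow> bool) \<Rightarrow> (nat \<Rightarrow> nat \<Rightarrow> bool) \<Rightarrow> nat \<Rightarrow> nat \<Rightarrow> bool" where
  "kron n2 A1 A2 i j =
     (A1 ((i - 1) div n2 + 1) ((j - 1) div n2 + 1) \<and> A2 ((i - 1) mod n2 + 1) ((j - 1) mod n2 + 1))"

definition lin_pair :: "nat \<Rightarrow> nat \<Rightarrow> nat \<Rightarrow> nat \<Rightarrow> nat \<times> nat" where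
  "lin_pair n1 n2 i j =
     (let i1 = (i - 1) div n2 + 1; i2 = (i - 1) mod n2 + 1;
          j1 = (j - 1) div n2 + 1; j2 = (j - 1) mod n2 + 1
      in ((j1 - 1) * n1 + i1, (j2 - 1) * n2 + i2))"

definition pair_set :: "nat \<Rightarrow> nat \<Rightarrow> nat \<Rightarrow> (nat \<Rightarrow> nat \<Rightarrow> bool) \<Rightarrow> (nat \<times> nat) set" where
  "pair_set n n1 n2 A =
     {lin_pair n1 n2 i j | i j. i \<in> {1..n} \<and> j \<in> {1..n} \<and> A i j}"

end

theory Submission imports Defs begin
lemma enc_dec:
  fixes m a b :: nat
  assumes "0 < m" "1 \<le> a" "a \<le> m"
  shows "((b - 1) * m + a - 1) div m = b - 1" "((b - 1) * m + a - 1) mod m = a - 1"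
proof -
  have e: "(b - 1) * m + a - 1 = (a - 1) + (b - 1) * m" using assms(2) by simp
  have "((a - 1) + (b - 1) * m) div m = (b - 1) + (a - 1) div m"
    using assms(1) by simp
  moreover have "(a - 1) div m = 0" using assms by simp
  ultimately show "((b - 1) * m + a - 1) div m = b - 1" unfolding e by simp
  have "((a - 1) + (b - 1) * m) mod m = (a - 1) mod m" by simp
  moreover have "(a - 1) mod m = a - 1" using assms by simp
  ultimately show "((b - 1) * m + a - 1) mod m = a - 1" unfolding e by simp
qed
lemma idx_bound:
  fixes n n1 n2 i :: nat
  assumes "n1 * n2 = n" "i \<in> {1..n}" "0 < n2"
  shows "(i - 1) div n2 + 1 \<le> n1" "(i - 1) mod n2 + 1 \<le> n2"
proof -
  have "i - 1 < n1 * n2" using assms by (cases i) auto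
  then have "(i - 1) div n2 < n1" using assms(3)
    by (simp add: less_mult_imp_div_less)
  then show "(i - 1) div n2 + 1 \<le> n1" by simp
  show "(i - 1) mod n2 + 1 \<le> n2" using assms(3) by (simp add: Suc_leI)
qed

lemma lin_inj:
  fixes n n1 n2 i j i' j' :: nat
  assumes "0 < n1" "0 < n2" "n1 * n2 = n"
    and "i \<in> {1..n}" "j \<in> {1..n}" "i' \<in> {1..n}" "j' \<in> {1..n}"
    and "lin_pair n1 n2 i j = lin_pair n1 n2 i' j'"
  shows "i = i' \<and> j = j'"
proof -
  let ?i1 = "(i - 1) div n2 + 1" and ?i2 = "(i - 1) mod n2 + 1"
  let ?j1 = "(j - 1) div n2 + 1" and ?j2 = "(j - 1) mod n2 + 1"
  let ?k1 = "(i' - 1) div n2 + 1" and ?k2 = "(i' - 1) mod n2 + 1"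
  let ?m1 = "(j' - 1) div n2 + 1" and ?m2 = "(j' - 1) mod n2 + 1"
  have b: "?i1 \<le> n1" "?i2 \<le> n2" "?j1 \<le> n1" "?j2 \<le> n2"
          "?k1 \<le> n1" "?k2 \<le> n2" "?m1 \<le> n1" "?m2 \<le> n2"
    using idx_bound assms by blast+
  have e1: "(?j1 - 1) * n1 + ?i1 = (?m1 - 1) * n1 + ?k1"
   and e2: "(?j2 - 1) * n2 + ?i2 = (?m2 - 1) * n2 + ?k2"
    using assms(8) unfolding lin_pair_def Let_def by auto
  have p1: "1 \<le> ?i1" "1 \<le> ?i2" "1 \<le> ?k1" "1 \<le> ?k2" by simp_all
  note E1 = enc_dec[OF assms(1) p1(1) b(1), of ?j1] enc_dec[OF assms(1) p1(3) b(5), of ?m1]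
  note E2 = enc_dec[OF assms(2) p1(2) b(2), of ?j2] enc_dec[OF assms(2) p1(4) b(6), of ?m2]
  have "?i1 - 1 = ?k1 - 1" using E1(2) E1(4) unfolding e1 by simp
  moreover have "?j1 - 1 = ?m1 - 1" using E1(1) E1(3) unfolding e1 by simp
  moreover have "?i2 - 1 = ?k2 - 1" using E2(2) E2(4) unfolding e2 by simp
  moreover have "?j2 - 1 = ?m2 - 1" using E2(1) E2(3) unfolding e2 by simp
  ultimately have q: "(i-1) div n2 = (i'-1) div n2" "(i-1) mod n2 = (i'-1) mod n2"
     "(j-1) div n2 = (j'-1) div n2" "(j-1) mod n2 = (j'-1) mod n2" by simp_all
  have "i - 1 = i' - 1"
    using div_mult_mod_eq[of "i-1" n2] div_mult_mod_eq[of "i'-1" n2] q(1,2) by metis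
  moreover have "j - 1 = j' - 1"
    using div_mult_mod_eq[of "j-1" n2] div_mult_mod_eq[of "j'-1" n2] q(3,4) by metis
  ultimately have "i - 1 = i' - 1" "j - 1 = j' - 1" by blast+
  then show ?thesis using assms(4-7) by auto
qed

theorem lemma4:
  fixes A :: "nat \<Rightarrow> nat \<Rightarrow> bool" and n n1 n2 :: nat
  assumes "n1 > 0" and "n2 > 0" and "n1 * n2 = n"
  shows "(\<exists>A1 A2 :: nat \<Rightarrow> nat \<Rightarrow> bool.
            \<forall>i\<in>{1..n}. \<forall>j\<in>{1..n}. A i j = kron n2 A1 A2 i j)
         \<longleftrightarrow> (\<exists>S1 S2 :: nat set. pair_set n n1 n2 A = S1 \<times> S2)"
proof
  assume "\<exists>A1 A2 :: nat \<Rightarrow> nat \<Rightarrow> bool.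
            \<forall>i\<in>{1..n}. \<forall>j\<in>{1..n}. A i j = kron n2 A1 A2 i j"
  then obtain A1 A2 where hA: "\<forall>i\<in>{1..n}. \<forall>j\<in>{1..n}. A i j = kron n2 A1 A2 i j" by blast
  define S1 where "S1 = {(j1 - 1) * n1 + i1 | i1 j1. i1 \<in> {1..n1} \<and> j1 \<in> {1..n1} \<and> A1 i1 j1}"
  define S2 where "S2 = {(j2 - 1) * n2 + i2 | i2 j2. i2 \<in> {1..n2} \<and> j2 \<in> {1..n2} \<and> A2 i2 j2}"
  have "pair_set n n1 n2 A = S1 \<times> S2"
  proof
    show "pair_set n n1 n2 A \<subseteq> S1 \<times> S2"
    proof
      fix p assume "p \<in> pair_set n n1 n2 A"
      then obtain i j where ij: "i \<in> {1..n}" "j \<in> {1..n}" "A i j" "p = lin_pair n1 n2 i j"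
        unfolding pair_set_def by blast
      have b: "(i - 1) div n2 + 1 \<le> n1" "(i - 1) mod n2 + 1 \<le> n2"
              "(j - 1) div n2 + 1 \<le> n1" "(j - 1) mod n2 + 1 \<le> n2"
        using idx_bound assms ij by blast+
      have k: "kron n2 A1 A2 i j" using hA ij by blast
      show "p \<in> S1 \<times> S2"
        unfolding ij(4) mem_Times_iff
      proof
        show "fst (lin_pair n1 n2 i j) \<in> S1" unfolding S1_def lin_pair_def Let_def fst_conv
          using b k unfolding kron_def by (intro CollectI exI[of _ "(i - 1) div n2 + 1"] exI[of _ "(j - 1) div n2 + 1"]) auto
        show "snd (lin_pair n1 n2 i j) \<in> S2" unfolding S2_def lin_pair_def Let_def snd_conv
          using b k unfolding kron_def by (intro CollectI exI[of _ "(i - 1) mod n2 + 1"] exI[of _ "(j - 1) mod n2 + 1"]) auto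
      qed
    qed
  next
    show "S1 \<times> S2 \<subseteq> pair_set n n1 n2 A"
    proof
      fix p assume "p \<in> S1 \<times> S2"
      then obtain i1 j1 i2 j2 where h: "i1 \<in> {1..n1}" "j1 \<in> {1..n1}" "A1 i1 j1"
        "i2 \<in> {1..n2}" "j2 \<in> {1..n2}" "A2 i2 j2"
        "p = ((j1 - 1) * n1 + i1, (j2 - 1) * n2 + i2)"
        unfolding S1_def S2_def by auto
      define i where "i = (i1 - 1) * n2 + i2"
      define j where "j = (j1 - 1) * n2 + j2"
      have di: "(i - 1) div n2 = i1 - 1" "(i - 1) mod n2 = i2 - 1"
        using enc_dec[OF assms(2), of i2 i1] h unfolding i_def by auto
      have dj: "(j - 1) div n2 = j1 - 1" "(j - 1) mod n2 = j2 - 1"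
        using enc_dec[OF assms(2), of j2 j1] h unfolding j_def by auto
      have ir: "i \<in> {1..n}"
      proof -
        have "(i1 - 1) * n2 + i2 \<le> (i1 - 1) * n2 + n2" using h by simp
        also have "\<dots> = i1 * n2" using h by (cases i1) auto
        also have "\<dots> \<le> n1 * n2" using h by simp
        finally show ?thesis using h assms(3) unfolding i_def by auto
      qed
      have jr: "j \<in> {1..n}"
      proof -
        have "(j1 - 1) * n2 + j2 \<le> (j1 - 1) * n2 + n2" using h by simp
        also have "\<dots> = j1 * n2" using h by (cases j1) auto
        also have "\<dots> \<le> n1 * n2" using h by simp
        finally show ?thesis using h assms(3) unfolding j_def by auto
      qed
      have "A i j" using hA ir jr h di dj unfolding kron_def by auto
      moreover have "p = lin_pair n1 n2 i j"
        unfolding lin_pair_def Let_def di dj h(7) using h by auto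
      ultimately show "p \<in> pair_set n n1 n2 A" unfolding pair_set_def using ir jr by blast
    qed
  qed
  then show "\<exists>S1 S2 :: nat set. pair_set n n1 n2 A = S1 \<times> S2" by blast
next
  assume "\<exists>S1 S2 :: nat set. pair_set n n1 n2 A = S1 \<times> S2"
  then obtain S1 S2 where hS: "pair_set n n1 n2 A = S1 \<times> S2" by blast
  define A1 where "A1 = (\<lambda>i1 j1. (j1 - 1) * n1 + i1 \<in> S1)"
  define A2 where "A2 = (\<lambda>i2 j2. (j2 - 1) * n2 + i2 \<in> S2)"
  have "\<forall>i\<in>{1..n}. \<forall>j\<in>{1..n}. A i j = kron n2 A1 A2 i j"
  proof (intro ballI)
    fix i j assume ij: "i \<in> {1..n}" "j \<in> {1..n}"
    have "A i j \<longleftrightarrow> lin_pair n1 n2 i j \<in> pair_set n n1 n2 A"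
    proof
      assume "A i j" then show "lin_pair n1 n2 i j \<in> pair_set n n1 n2 A"
        unfolding pair_set_def using ij by blast
    next
      assume "lin_pair n1 n2 i j \<in> pair_set n n1 n2 A"
      then obtain i' j' where "i' \<in> {1..n}" "j' \<in> {1..n}" "A i' j'"
        "lin_pair n1 n2 i j = lin_pair n1 n2 i' j'"
        unfolding pair_set_def by blast
      with lin_inj[OF assms ij] show "A i j" by metis
    qed
    also have "\<dots> \<longleftrightarrow> kron n2 A1 A2 i j"
      unfolding hS kron_def A1_def A2_def lin_pair_def Let_def by simp
    finally show "A i j = kron n2 A1 A2 i j" .
  qed
  then show "\<exists>A1 A2 :: nat \<Rightarrow> nat \<Rightarrow> bool.
            \<forall>i\<in>{1..n}. \<forall>j\<in>{1..n}. A i j = kron n2 A1 A2 i j" by blast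
qed

end
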